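(* Let $\eta^{(\varepsilon)}_n$, $\varepsilon\in(0,1]$, be Markov chains on $\mathbb{X}=\{1,\dots,N\}$ with transition probabilities $p_{ij}(\varepsilon)$ satisfying conditions A and D of the context for some $\varepsilon_0\in(0,1]$ and transition sets $\mathbb{Y}_i$. Then for every $r\in\mathbb{X}$ the non-absorption probability $\bar p_{rr}(\varepsilon)=1-p_{rr}(\varepsilon)$ admits a pivotal $(\bar l^-_{rr},\bar l^+_{rr})$-expansion $\bar p_{rr}(\varepsilon)=\sum_{l=\bar l^-_{rr}}^{\bar l^+_{rr}}\bar a_{rr}[l]\varepsilon^l+\bar o_{rr}(\varepsilon^{\bar l^+_{rr}})$, $\varepsilon\in(0,\varepsilon_0]$.
   Context: A $(h,k)$-expansion of $A$ on $(0,\varepsilon_0]$: $A(\varepsilon)=\sum_{l=h}^ka_l\varepsilon^l+o_A(\varepsilon^k)$ with integers $h\le k$, real $a_l$, $o_A(\varepsilon^k)/\varepsilon^k\to0$ as $\varepsilon\to0$; pivotal means $a_h\ne0$. For $\varepsilon\in(0,1]$, $\eta^{(\varepsilon)}_n$ is a homogeneous Markov chain on $\mathbb{X}$ with stochastic transition matrix $\|p_{ij}(\varepsilon)\|$. Condition A: there exist $\mathbb{Y}_i\subseteq\mathbb{X}$, $i\in\mathbb{X}$, and $\varepsilon_0\in(0,1]$ such that for $\varepsilon\in(0,\varepsilon_0]$: (a) $p_{ij}(\varepsilon)>0$ for $j\in\mathbb{Y}_i$; (b) $p_{ij}(\varepsilon)=0$ for $j\notin\mathbb{Y}_i$; (c)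 for every $i,j\in\mathbb{X}$ there exist $n\ge1$ and $i=l_0,\dots,l_n=j$ with $l_{k+1}\in\mathbb{Y}_{l_k}$. Condition D: for $j\in\mathbb{Y}_i$, $i\in\mathbb{X}$: $p_{ij}(\varepsilon)=\sum_{l=l^-_{ij}}^{l^+_{ij}}a_{ij}[l]\varepsilon^l+o_{ij}(\varepsilon^{l^+_{ij}})$, $\varepsilon\in(0,\varepsilon_0]$, with integers $0\le l^-_{ij}\le l^+_{ij}<\infty$, $a_{ij}[l^-_{ij}]>0$, $o_{ij}(\varepsilon^{l^+_{ij}})/\varepsilon^{l^+_{ij}}\to0$. *)

theory Defs
  imports Complex_Main
begin

definition has_expansion ::
  "(real \<Rightarrow> real) \<Rightarrow> real \<Rightarrow> int \<Rightarrow> int \<Rightarrow> (int \<Rightarrow> real) \<Rightarrow> bool" where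
  "has_expansion A eps0 h k a \<longleftrightarrow> h \<le> k \<and>
     (\<exists>oA :: real \<Rightarrow> real.
        (\<forall>e \<in> {0<..eps0}. A e = (\<Sum>l=h..k. a l * e powi l) + oA e) \<and>
        ((\<lambda>e. oA e / e powi k) \<longlongrightarrow> 0) (at_right 0))"

definition pivotal_expansion ::
  "(real \<Rightarrow> real) \<Rightarrow> real \<Rightarrow> int \<Rightarrow> int \<Rightarrow> (int \<Rightarrow> real) \<Rightarrow> bool" where
  "pivotal_expansion A eps0 h k a \<longleftrightarrow> has_expansion A eps0 h k a \<and> a h \<noteq> 0"

definition stochastic_family :: "nat \<Rightarrow> (real \<Rightarrow> nat \<Rightarrow> nat \<Rightarrow> real) \<Rightarrow> bool" where
  "stochastic_family N p \<longleftrightarrow>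
     (\<forall>e \<in> {0<..1}. \<forall>i \<in> {1..N}.
        (\<forall>j \<in> {1..N}. 0 \<le> p e i j) \<and> (\<Sum>j\<in>{1..N}. p e i j) = 1)"

definition condition_A ::
  "nat \<Rightarrow> (real \<Rightarrow> nat \<Rightarrow> nat \<Rightarrow> real) \<Rightarrow> (nat \<Rightarrow> nat set) \<Rightarrow> real \<Rightarrow> bool" where
  "condition_A N p Y eps0 \<longleftrightarrow> 0 < eps0 \<and> eps0 \<le> 1 \<and>
     (\<forall>i \<in> {1..N}. Y i \<subseteq> {1..N}) \<and>
     (\<forall>e \<in> {0<..eps0}. \<forall>i \<in> {1..N}. \<forall>j \<in> {1..N}.
        (j \<in> Y i \<longrightarrow> p e i j > 0) \<and> (j \<notin> Y i \<longrightarrow> p e i j = 0)) \<and>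
     (\<forall>i \<in> {1..N}. \<forall>j \<in> {1..N}. \<exists>n \<ge> 1. \<exists>l :: nat \<Rightarrow> nat.
        l 0 = i \<and> l n = j \<and> (\<forall>k < n. l (Suc k) \<in> Y (l k)))"

definition condition_D ::
  "nat \<Rightarrow> (real \<Rightarrow> nat \<Rightarrow> nat \<Rightarrow> real) \<Rightarrow> (nat \<Rightarrow> nat set) \<Rightarrow> real \<Rightarrow> bool" where
  "condition_D N p Y eps0 \<longleftrightarrow>
     (\<forall>i \<in> {1..N}. \<forall>j \<in> Y i. \<exists>lm lp a.
        0 \<le> lm \<and> has_expansion (\<lambda>e. p e i j) eps0 lm lp a \<and> a lm > 0)"

end

theory Submission
  imports Defs
begin

lemma powi_lim:
  assumes "(0::int) \<le> n"
  shows "((\<lambda>e::real. e powi n) \<longlongrightarrow> (if n = 0 then 1 else 0)) (at_right 0)"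
proof -
  obtain m where n: "n = int m" using assms nonneg_eq_int by blast
  have "((\<lambda>e::real. e ^ m) \<longlongrightarrow> 0 ^ m) (at_right 0)"
    by (intro tendsto_intros)
  moreover have "(0::real) ^ m = (if n = 0 then 1 else 0)" using n by simp
  ultimately show ?thesis using n by (simp add: power_int_of_nat)
qed

lemma exp_lead:
  assumes "has_expansion A eps0 h k a" "0 < eps0"
  shows "((\<lambda>e. A e / e powi h) \<longlongrightarrow> a h) (at_right 0)"
proof -
  obtain oA where hk: "h \<le> k" and eq: "\<forall>e\<in>{0<..eps0}. A e = (\<Sum>l=h..k. a l * e powi l) + oA e"
    and lim: "((\<lambda>e. oA e / e powi k) \<longlongrightarrow> 0) (at_right 0)"
    using assms(1) unfolding has_expansion_def by blast
  have ev: "eventually (\<lambda>e. (\<Sum>l=h..k. a l * e powi (l - h)) + (oA e / e powi k) * e powi (k - h)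
      = A e / e powi h) (at_right 0)"
    using eventually_at_right_real[OF assms(2)]
  proof (rule eventually_mono)
    fix e :: real assume e: "e \<in> {0<..<eps0}"
    hence e0: "e \<noteq> 0" by auto
    have "A e / e powi h = (\<Sum>l=h..k. a l * e powi l / e powi h) + oA e / e powi h"
      using eq e by (simp add: sum_divide_distrib add_divide_distrib)
    also have "(\<Sum>l=h..k. a l * e powi l / e powi h) = (\<Sum>l=h..k. a l * e powi (l - h))"
      using e0 by (intro sum.cong) (simp_all add: power_int_diff)
    also have "oA e / e powi h = (oA e / e powi k) * e powi (k - h)"
      using e0 by (simp add: power_int_diff)
    finally show "(\<Sum>l=h..k. a l * e powi (l - h)) + (oA e / e powi k) * e powi (k - h)
      = A e / e powi h" by simp
  qed
  have t1: "((\<lambda>e. \<Sum>l=h..k. a l * e powi (l - h)) \<longlongrightarrow> (\<Sum>l=h..k. a l * (if l - h = 0 then 1 else 0))) (at_right 0)"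
    by (intro tendsto_sum tendsto_mult tendsto_const powi_lim) auto
  have s: "(\<Sum>l=h..k. a l * (if l - h = 0 then 1 else 0)) = a h"
  proof -
    have "(\<Sum>l=h..k. a l * (if l - h = 0 then 1 else 0)) = (\<Sum>l\<in>{h..k}. if l = h then a l else 0)"
      by (intro sum.cong) auto
    also have "\<dots> = a h" using hk by (simp add: sum.delta)
    finally show ?thesis .
  qed
  have t2: "((\<lambda>e. (oA e / e powi k) * e powi (k - h)) \<longlongrightarrow> 0 * (if k - h = 0 then 1 else 0)) (at_right 0)"
    using hk by (intro tendsto_mult lim powi_lim) auto
  have "((\<lambda>e. (\<Sum>l=h..k. a l * e powi (l - h)) + (oA e / e powi k) * e powi (k - h)) \<longlongrightarrow> a h + 0) (at_right 0)"
    using tendsto_add[OF t1 t2] s by simp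
  then show ?thesis using tendsto_cong[OF ev] by simp
qed

lemma exists_exit:
  assumes "l 0 = r" "l n = j" "j \<noteq> r" "\<forall>k<n. l (Suc k) \<in> Y (l k)"
  shows "\<exists>j'. j' \<in> Y r \<and> j' \<noteq> r"
proof (rule ccontr)
  assume "\<not> ?thesis"
  hence Yr: "\<forall>x\<in>Y r. x = r" by blast
  have "\<forall>k\<le>n. l k = r"
  proof (intro allI impI)
    fix k assume "k \<le> n" thus "l k = r"
    proof (induction k)
      case 0 thus ?case using assms by simp
    next
      case (Suc k)
      hence "l k = r" by simp
      thus ?case using assms(4) Suc.prems Yr by force
    qed
  qed
  thus False using assms by auto
qed

theorem lemma8:
  fixes N :: nat and p :: "real \<Rightarrow> nat \<Rightarrow> nat \<Rightarrow> real"
    and Y :: "nat \<Rightarrow> nat set" and eps0 :: real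
  assumes "2 \<le> N"
    and "stochastic_family N p"
    and "condition_A N p Y eps0"
    and "condition_D N p Y eps0"
  shows "\<forall>r \<in> {1..N}. \<exists>lm lp a.
           pivotal_expansion (\<lambda>e. 1 - p e r r) eps0 lm lp a"
proof
  fix r assume r: "r \<in> {1..N}"
  have eps: "0 < eps0" "eps0 \<le> 1" and Ysub: "Y r \<subseteq> {1..N}"
    and pz: "\<forall>e \<in> {0<..eps0}. \<forall>j \<in> {1..N}. j \<notin> Y r \<longrightarrow> p e r j = 0"
    and path: "\<forall>i \<in> {1..N}. \<forall>j \<in> {1..N}. \<exists>n \<ge> 1. \<exists>l :: nat \<Rightarrow> nat.
        l 0 = i \<and> l n = j \<and> (\<forall>k < n. l (Suc k) \<in> Y (l k))"
  proof -
    have cA: "0 < eps0 \<and> eps0 \<le> 1 \<and>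
     (\<forall>i \<in> {1..N}. Y i \<subseteq> {1..N}) \<and>
     (\<forall>e \<in> {0<..eps0}. \<forall>i \<in> {1..N}. \<forall>j \<in> {1..N}.
        (j \<in> Y i \<longrightarrow> p e i j > 0) \<and> (j \<notin> Y i \<longrightarrow> p e i j = 0)) \<and>
     (\<forall>i \<in> {1..N}. \<forall>j \<in> {1..N}. \<exists>n \<ge> 1. \<exists>l :: nat \<Rightarrow> nat.
        l 0 = i \<and> l n = j \<and> (\<forall>k < n. l (Suc k) \<in> Y (l k)))"
      using assms(3) unfolding condition_A_def by blast
    show "0 < eps0" "eps0 \<le> 1" using cA by blast+
    show "Y r \<subseteq> {1..N}" using cA r by blast
    show "\<forall>e \<in> {0<..eps0}. \<forall>j \<in> {1..N}. j \<notin> Y r \<longrightarrow> p e r j = 0"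
      using cA r by blast
    show "\<forall>i \<in> {1..N}. \<forall>j \<in> {1..N}. \<exists>n \<ge> 1. \<exists>l :: nat \<Rightarrow> nat.
        l 0 = i \<and> l n = j \<and> (\<forall>k < n. l (Suc k) \<in> Y (l k))" using cA by blast
  qed
  define S where "S = Y r - {r}"
  have finS: "finite S" using Ysub finite_subset unfolding S_def by blast
  obtain j where j: "j \<in> {1..N}" "j \<noteq> r"
  proof (cases "r = 1")
    case True thus ?thesis using that[of 2] assms(1) by auto
  next
    case False thus ?thesis using that[of 1] assms(1) r by auto
  qed
  obtain n l where "l 0 = r" "l n = j" "\<forall>k < n. l (Suc k) \<in> Y (l k)"
  proof -
    have "\<exists>n \<ge> 1. \<exists>l :: nat \<Rightarrow> nat. l 0 = r \<and> l n = j \<and> (\<forall>k < n. l (Suc k) \<in> Y (l k))"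
      using bspec[OF bspec[OF path r] j(1)] .
    thus ?thesis using that by blast
  qed
  then obtain j' where "j' \<in> Y r" "j' \<noteq> r" using exists_exit j by metis
  hence Sne: "S \<noteq> {}" unfolding S_def by blast
  have "\<forall>j\<in>Y r. \<exists>lm lp a. 0 \<le> lm \<and> has_expansion (\<lambda>e. p e r j) eps0 lm lp a \<and> a lm > 0"
    using assms(4) r unfolding condition_D_def by (rule bspec)
  then obtain LM LP AA where D: "\<forall>j\<in>Y r. 0 \<le> LM j \<and> has_expansion (\<lambda>e. p e r j) eps0 (LM j) (LP j) (AA j) \<and> AA j (LM j) > 0"
    by metis
  define m where "m = Min (LM ` S)"
  have mle: "\<And>j. j \<in> S \<Longrightarrow> m \<le> LM j" unfolding m_def using finS by simp
  have "m \<in> LM ` S" unfolding m_def using finS Sne by (intro Min_in) auto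
  then obtain j0 where j0: "j0 \<in> S" "LM j0 = m" by blast
  define c where "c = (\<Sum>j\<in>S. if LM j = m then AA j m else 0)"
  have cpos: "c > 0"
  proof -
    have "c \<ge> (if LM j0 = m then AA j0 m else 0)"
      unfolding c_def using finS j0 D S_def
      by (intro member_le_sum) auto
    moreover have "AA j0 m > 0" using D j0 S_def by auto
    ultimately show ?thesis using j0 by simp
  qed
  have sumeq: "\<And>e. e \<in> {0<..eps0} \<Longrightarrow> 1 - p e r r = (\<Sum>j\<in>S. p e r j)"
  proof -
    fix e :: real assume e: "e \<in> {0<..eps0}"
    hence "e \<in> {0<..1}" using eps by auto
    hence one: "(\<Sum>j\<in>{1..N}. p e r j) = 1" using assms(2) r unfolding stochastic_family_def by blast
    have "(\<Sum>j\<in>{1..N}. p e r j) = p e r r + (\<Sum>j\<in>{1..N}-{r}. p e r j)"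
      using r by (simp add: sum.remove)
    also have "(\<Sum>j\<in>{1..N}-{r}. p e r j) = (\<Sum>j\<in>S. p e r j)"
      using pz e Ysub unfolding S_def by (intro sum.mono_neutral_right) auto
    finally show "1 - p e r r = (\<Sum>j\<in>S. p e r j)" using one by simp
  qed
  have tj: "((\<lambda>e. p e r j / e powi m) \<longlongrightarrow> (if LM j = m then AA j m else 0)) (at_right 0)"
    if jS: "j \<in> S" for j
  proof -
    have hj: "has_expansion (\<lambda>e. p e r j) eps0 (LM j) (LP j) (AA j)" using D jS S_def by auto
    have a: "((\<lambda>e. p e r j / e powi LM j) \<longlongrightarrow> AA j (LM j)) (at_right 0)"
      using exp_lead[OF hj eps(1)] by simp
    have b: "((\<lambda>e. (p e r j / e powi LM j) * e powi (LM j - m)) \<longlongrightarrow>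
        AA j (LM j) * (if LM j - m = 0 then 1 else 0)) (at_right 0)"
      using mle[OF jS] by (intro tendsto_mult a powi_lim) auto
    have ev: "eventually (\<lambda>e. (p e r j / e powi LM j) * e powi (LM j - m) = p e r j / e powi m) (at_right 0)"
      using eventually_at_right_real[OF eps(1)]
      by (rule eventually_mono) (auto simp: power_int_diff)
    show ?thesis using tendsto_cong[OF ev] b by (auto split: if_splits)
  qed
  have tsum: "((\<lambda>e. (\<Sum>j\<in>S. p e r j) / e powi m) \<longlongrightarrow> c) (at_right 0)"
    unfolding c_def sum_divide_distrib by (intro tendsto_sum tj)
  define oA where "oA = (\<lambda>e. 1 - p e r r - c * e powi m)"
  have ev2: "eventually (\<lambda>e. (\<Sum>j\<in>S. p e r j) / e powi m - c = oA e / e powi m) (at_right 0)"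
    using eventually_at_right_real[OF eps(1)]
    by (rule eventually_mono) (auto simp: oA_def sumeq diff_divide_distrib)
  have "((\<lambda>e. (\<Sum>j\<in>S. p e r j) / e powi m - c) \<longlongrightarrow> c - c) (at_right 0)"
    by (intro tendsto_diff tsum tendsto_const)
  hence limo: "((\<lambda>e. oA e / e powi m) \<longlongrightarrow> 0) (at_right 0)"
    using tendsto_cong[OF ev2] by simp
  have "pivotal_expansion (\<lambda>e. 1 - p e r r) eps0 m m (\<lambda>_. c)"
    unfolding pivotal_expansion_def has_expansion_def
    using limo cpos by (auto simp: oA_def intro!: exI[of _ oA])
  thus "\<exists>lm lp a. pivotal_expansion (\<lambda>e. 1 - p e r r) eps0 lm lp a" by blast
qed

end
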